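(* Let $\alpha$ be an automorphism of a group $C$ with $\alpha^2=1$. If $Z^1_\alpha(C)$ is 2-divisible, then $H^1_\alpha(C)=\{1\}$. If $C$ is strongly 2-divisible, then $Z^1_\alpha(C)$ is also strongly 2-divisible, and consequently $H^1_\alpha(C)=\{1\}$.
   Context: A subset $S$ of a group is 2-divisible if every $s\in S$ equals $t^2$ for some $t\in S$; a group $C$ is strongly 2-divisible if every element has a unique square root in $C$. $Z^1_\alpha(C)=\{z\in C:\alpha(z)=z^{-1}\}$ and $H^1_\alpha(C)$ is the set of $C$-orbits in $Z^1_\alpha(C)$ under $x\cdot z=xz\alpha(x)^{-1}$; $H^1_\alpha(C)=\{1\}$ means $Z^1_\alpha(C)=\{y\alpha(y)^{-1}:y\in C\}$. *)

theory Defs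
  imports "HOL-Algebra.Group"
begin

definition two_divisible :: "('a, 'b) monoid_scheme \<Rightarrow> 'a set \<Rightarrow> bool" where
  "two_divisible C S \<longleftrightarrow> (\<forall>s\<in>S. \<exists>t\<in>S. s = t \<otimes>\<^bsub>C\<^esub> t)"

definition strongly_two_divisible_set :: "('a, 'b) monoid_scheme \<Rightarrow> 'a set \<Rightarrow> bool" where
  "strongly_two_divisible_set C S \<longleftrightarrow> (\<forall>s\<in>S. \<exists>!t. t \<in> S \<and> t \<otimes>\<^bsub>C\<^esub> t = s)"

definition strongly_two_divisible :: "('a, 'b) monoid_scheme \<Rightarrow> bool" where
  "strongly_two_divisible C \<longleftrightarrow> strongly_two_divisible_set C (carrier C)"

definition Z1 :: "('a, 'b) monoid_scheme \<Rightarrow> ('a \<Rightarrow> 'a) \<Rightarrow> 'a set" where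
  "Z1 C \<alpha> = {z \<in> carrier C. \<alpha> z = inv\<^bsub>C\<^esub> z}"

definition twisted_orbit :: "('a, 'b) monoid_scheme \<Rightarrow> ('a \<Rightarrow> 'a) \<Rightarrow> 'a \<Rightarrow> 'a set" where
  "twisted_orbit C \<alpha> z = {x \<otimes>\<^bsub>C\<^esub> z \<otimes>\<^bsub>C\<^esub> inv\<^bsub>C\<^esub> (\<alpha> x) | x. x \<in> carrier C}"

definition H1 :: "('a, 'b) monoid_scheme \<Rightarrow> ('a \<Rightarrow> 'a) \<Rightarrow> 'a set set" where
  "H1 C \<alpha> = twisted_orbit C \<alpha> ` Z1 C \<alpha>"

end

theory Submission
  imports Defs
begin

theorem lemma2p11:
  fixes C (structure) and \<alpha> :: "'a \<Rightarrow> 'a"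
  assumes "group C"
    and "\<alpha> \<in> iso C C"
    and "\<forall>x\<in>carrier C. \<alpha> (\<alpha> x) = x"
  shows "(two_divisible C (Z1 C \<alpha>) \<longrightarrow> H1 C \<alpha> = {twisted_orbit C \<alpha> \<one>})
       \<and> (strongly_two_divisible C \<longrightarrow>
            strongly_two_divisible_set C (Z1 C \<alpha>) \<and> H1 C \<alpha> = {twisted_orbit C \<alpha> \<one>})"
proof -
  interpret G: group C by fact
  have hom: "\<alpha> \<in> hom C C" using assms(2) by (simp add: iso_def)
  interpret GH: group_hom C C \<alpha> using hom by (simp add: group_hom_def group_hom_axioms_def G.group_axioms)
  have cl: "\<And>x. x \<in> carrier C \<Longrightarrow> \<alpha> x \<in> carrier C" using hom by (simp add: hom_def Pi_def)
  have mu: "\<And>x y. x \<in> carrier C \<Longrightarrow> y \<in> carrier C \<Longrightarrow> \<alpha> (x \<otimes> y) = \<alpha> x \<otimes> \<alpha> y"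
    using hom by (simp add: hom_def)
  have one: "\<alpha> \<one> = \<one>" using GH.hom_one by simp
  have part1: "H1 C \<alpha> = {twisted_orbit C \<alpha> \<one>}" if td: "two_divisible C (Z1 C \<alpha>)"
  proof -
    have "twisted_orbit C \<alpha> z = twisted_orbit C \<alpha> \<one>" if z: "z \<in> Z1 C \<alpha>" for z
    proof -
      obtain t where t: "t \<in> Z1 C \<alpha>" "z = t \<otimes> t" using td z unfolding two_divisible_def by blast
      have tc: "t \<in> carrier C" and at: "\<alpha> t = inv t" using t unfolding Z1_def by auto
      have eq: "x \<otimes> z \<otimes> inv (\<alpha> x) = (x \<otimes> t) \<otimes> \<one> \<otimes> inv (\<alpha> (x \<otimes> t))" if x: "x \<in> carrier C" for x
      proof -
        have "inv (\<alpha> (x \<otimes> t)) = t \<otimes> inv (\<alpha> x)"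
          using x tc cl at by (simp add: mu G.inv_mult_group)
        then show ?thesis using x tc cl t(2) by (simp add: G.m_assoc)
      qed
      show ?thesis
      proof
        show "twisted_orbit C \<alpha> z \<subseteq> twisted_orbit C \<alpha> \<one>"
        proof
          fix w assume "w \<in> twisted_orbit C \<alpha> z"
          then obtain x where x: "x \<in> carrier C" "w = x \<otimes> z \<otimes> inv (\<alpha> x)"
            unfolding twisted_orbit_def by auto
          have "x \<otimes> t \<in> carrier C" using x tc by simp
          moreover have "w = (x \<otimes> t) \<otimes> \<one> \<otimes> inv (\<alpha> (x \<otimes> t))" using x(2) eq[OF x(1)] by (rule trans)
          ultimately show "w \<in> twisted_orbit C \<alpha> \<one>" unfolding twisted_orbit_def by blast
        qed
      next
        show "twisted_orbit C \<alpha> \<one> \<subseteq> twisted_orbit C \<alpha> z"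
        proof
          fix w assume "w \<in> twisted_orbit C \<alpha> \<one>"
          then obtain y where y: "y \<in> carrier C" "w = y \<otimes> \<one> \<otimes> inv (\<alpha> y)"
            unfolding twisted_orbit_def by auto
          have yy: "y = (y \<otimes> inv t) \<otimes> t" using y tc by (simp add: G.m_assoc)
          have "w = (y \<otimes> inv t) \<otimes> z \<otimes> inv (\<alpha> (y \<otimes> inv t))"
          proof -
            have yc: "y \<otimes> inv t \<in> carrier C" using y tc by simp
            have "(y \<otimes> inv t) \<otimes> z \<otimes> inv (\<alpha> (y \<otimes> inv t)) = y \<otimes> \<one> \<otimes> inv (\<alpha> y)"
              using eq[OF yc] by (simp only: yy[symmetric])
            then show ?thesis using y(2) by (simp only:)
          qed
          then show "w \<in> twisted_orbit C \<alpha> z" unfolding twisted_orbit_def using y tc by blast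
        qed
      qed
    qed
    moreover have "\<one> \<in> Z1 C \<alpha>" unfolding Z1_def using one by simp
    ultimately show ?thesis unfolding H1_def
      by (metis (no_types, lifting) image_cong image_constant)
  qed
  have part2: "strongly_two_divisible_set C (Z1 C \<alpha>)" if sd: "strongly_two_divisible C"
    unfolding strongly_two_divisible_set_def
  proof
    fix z assume z: "z \<in> Z1 C \<alpha>"
    have zc: "z \<in> carrier C" and az: "\<alpha> z = inv z" using z unfolding Z1_def by auto
    have ex: "\<exists>!t. t \<in> carrier C \<and> t \<otimes> t = z"
      using sd zc unfolding strongly_two_divisible_def strongly_two_divisible_set_def by blast
    then obtain t where t: "t \<in> carrier C" "t \<otimes> t = z" and un: "\<And>u. u \<in> carrier C \<Longrightarrow> u \<otimes> u = z \<Longrightarrow> u = t"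
      by blast
    have "\<alpha> t \<otimes> \<alpha> t = inv z" using mu[OF t(1) t(1)] t(2) az by simp
    hence "inv (\<alpha> t) \<otimes> inv (\<alpha> t) = z" using t cl zc
      by (simp add: G.inv_mult_group[symmetric])
    hence "inv (\<alpha> t) = t" using t cl by (intro un) auto
    hence "inv (inv (\<alpha> t)) = inv t" by simp
    hence "\<alpha> t = inv t" using t cl by simp
    hence tz: "t \<in> Z1 C \<alpha>" unfolding Z1_def using t by simp
    show "\<exists>!t. t \<in> Z1 C \<alpha> \<and> t \<otimes> t = z"
      using tz t un unfolding Z1_def by blast
  qed
  have "strongly_two_divisible_set C S \<Longrightarrow> two_divisible C S" for S
    unfolding strongly_two_divisible_set_def two_divisible_def by metis
  then show ?thesis using part1 part2 by blast
qed

end
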